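(* Let $n\ge2$, $1<p<\infty$, let $\varrho\in\mathbb{R}^n$ be a unit vector and $B_\varrho:=B(0,1)\cap\{x\in\mathbb{R}^n:\varrho\cdot x<0\}$. For $u\in W^{1,p}_0(B(0,1);\mathbb{R}^m)$ let $\bar\delta_{\varrho,\nabla u}$ be the nonnegative Radon measure on the unit sphere $S^{mn-1}\subset\mathbb{R}^{m\times n}$ defined by $$\langle\bar\delta_{\varrho,\nabla u},\phi\rangle=|B_\varrho|^{-1}\int_{B_\varrho\cap\{\nabla u\ne0\}}\phi\Big(\frac{\nabla u(x)}{|\nabla u(x)|}\Big)|\nabla u(x)|^p\,\mathrm{d}x,\qquad\phi\in C(S^{mn-1}).$$ Then the set $H^\varrho:=\{\bar\delta_{\varrho,\nabla u}:u\in W^{1,p}_0(B(0,1);\mathbb{R}^m)\}$ is convex.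
   Context: $B(0,1)$ is the open unit ball of $\mathbb{R}^n$. (In the paper these measures are viewed as measures on the remainder $\beta_{\mathcal S}\mathbb{R}^{m\times n}\setminus\mathbb{R}^{m\times n}$ of the compactification of $\mathbb{R}^{m\times n}$ by the sphere, which is identified with $S^{mn-1}$.) *)

theory Defs
  imports "HOL-Analysis.Analysis"
begin

coinductive smooth_map :: "(real^'n::finite \<Rightarrow> real^'m::finite) \<Rightarrow> bool" where
  "(\<forall>x. f differentiable (at x)) \<Longrightarrow>
   (\<forall>i. smooth_map (\<lambda>x. frechet_derivative f (at x) (axis i 1))) \<Longrightarrow> smooth_map f"

definition jac :: "(real^'n::finite \<Rightarrow> real^'m::finite) \<Rightarrow> real^'n \<Rightarrow> real^'n^'m" where
  "jac f x = matrix (frechet_derivative f (at x))"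

abbreviation B1 :: "(real^'n::finite) set" where "B1 \<equiv> ball 0 1"

text \<open>W0 p u G: u belongs to W_0^{1,p}(B(0,1);R^m) with (weak) gradient G, i.e.
  u, G are in L^p(B(0,1)) and (u,G) is the W^{1,p}-limit of (phi_k, jac phi_k) for
  smooth maps phi_k with compact support contained in B(0,1).\<close>
definition W0 :: "real \<Rightarrow> (real^'n::finite \<Rightarrow> real^'m::finite) \<Rightarrow> (real^'n \<Rightarrow> real^'n^'m) \<Rightarrow> bool" where
  "W0 p u G \<longleftrightarrow>
     u \<in> borel_measurable (lebesgue_on B1) \<and> G \<in> borel_measurable (lebesgue_on B1) \<and>
     set_integrable lebesgue B1 (\<lambda>x. norm (u x) powr p) \<and>
     set_integrable lebesgue B1 (\<lambda>x. norm (G x) powr p) \<and>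
     (\<exists>\<phi> :: nat \<Rightarrow> real^'n \<Rightarrow> real^'m.
        (\<forall>k. smooth_map (\<phi> k) \<and> compact (closure {x. \<phi> k x \<noteq> 0}) \<and>
             closure {x. \<phi> k x \<noteq> 0} \<subseteq> B1) \<and>
        (\<lambda>k. LINT x:B1|lebesgue. norm (\<phi> k x - u x) powr p) \<longlonglongrightarrow> 0 \<and>
        (\<lambda>k. LINT x:B1|lebesgue. norm (jac (\<phi> k) x - G x) powr p) \<longlonglongrightarrow> 0)"

definition Brho :: "real^'n::finite \<Rightarrow> (real^'n) set" where
  "Brho \<rho> = B1 \<inter> {x. \<rho> \<bullet> x < 0}"

text \<open>The measure delta-bar_{rho, grad u} on the unit sphere S^{mn-1} of R^{m x n}
  (Frobenius norm), represented by its action on C(S^{mn-1}); set to 0 on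
  functions that are not continuous on the sphere.\<close>
definition delta_bar :: "real \<Rightarrow> real^'n::finite \<Rightarrow> (real^'n \<Rightarrow> real^'n^'m::finite)
    \<Rightarrow> (real^'n^'m \<Rightarrow> real) \<Rightarrow> real" where
  "delta_bar p \<rho> G \<phi> =
     (if continuous_on (sphere 0 1) \<phi> then
        (1 / measure lebesgue (Brho \<rho>)) *
        (LINT x:(Brho \<rho> \<inter> {x. G x \<noteq> 0})|lebesgue. \<phi> (G x /\<^sub>R norm (G x)) * norm (G x) powr p)
      else 0)"

definition Hrho :: "real \<Rightarrow> real^'n::finite \<Rightarrow> ((real^'n^'m::finite \<Rightarrow> real) \<Rightarrow> real) set" where
  "Hrho p \<rho> = {delta_bar p \<rho> G | G. \<exists>u. W0 p u G}"

end

theory Submission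
  imports Defs
begin

lemma lebesgue_affine_scale:
  fixes t :: "'a::euclidean_space" and c :: real
  assumes "c \<noteq> 0"
  shows "lebesgue = density (distr lebesgue lebesgue (\<lambda>x. t + c *\<^sub>R x)) (\<lambda>_. \<bar>c\<bar> ^ DIM('a))"
    and "(\<lambda>x. t + c *\<^sub>R x) \<in> lebesgue \<rightarrow>\<^sub>M lebesgue"
proof -
  have eq: "(\<lambda>x. t + (\<Sum>j\<in>Basis. (c * (x \<bullet> j)) *\<^sub>R j)) = (\<lambda>x::'a. t + c *\<^sub>R x)"
    unfolding scaleR_scaleR[symmetric] scaleR_sum_right[symmetric] euclidean_representation by simp
  show "lebesgue = density (distr lebesgue lebesgue (\<lambda>x. t + c *\<^sub>R x)) (\<lambda>_. \<bar>c\<bar> ^ DIM('a))"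
    using lebesgue_affine_euclidean[of "\<lambda>_. c" t] assms unfolding eq by (simp add: prod_constant)
  show "(\<lambda>x. t + c *\<^sub>R x) \<in> lebesgue \<rightarrow>\<^sub>M lebesgue"
    using lebesgue_affine_measurable[of "\<lambda>_. c" t] assms unfolding eq by simp
qed

lemma integrable_affine_imp:
  fixes f :: "'a::euclidean_space \<Rightarrow> real"
  assumes f: "integrable lebesgue f" and c: "c \<noteq> 0"
  shows "integrable lebesgue (\<lambda>x. f (t + c *\<^sub>R x))"
proof -
  have m: "(\<lambda>x. t + c *\<^sub>R x) \<in> lebesgue \<rightarrow>\<^sub>M lebesgue" using lebesgue_affine_scale[OF c] by blast
  have "integrable (density (distr lebesgue lebesgue (\<lambda>x. t + c *\<^sub>R x)) (\<lambda>_. \<bar>c\<bar> ^ DIM('a))) f"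
    using f lebesgue_affine_scale(1)[OF c, of t] by simp
  then have "integrable (distr lebesgue lebesgue (\<lambda>x. t + c *\<^sub>R x)) (\<lambda>x. \<bar>c\<bar> ^ DIM('a) *\<^sub>R f x)"
    using f by (subst (asm) integrable_density) (auto intro: borel_measurable_integrable)
  then have "integrable lebesgue (\<lambda>x. \<bar>c\<bar> ^ DIM('a) *\<^sub>R f (t + c *\<^sub>R x))"
    using m f by (subst (asm) integrable_distr_eq) (auto simp: borel_measurable_integrable)
  then have "integrable lebesgue (\<lambda>x. (1 / \<bar>c\<bar> ^ DIM('a)) *\<^sub>R (\<bar>c\<bar> ^ DIM('a) *\<^sub>R f (t + c *\<^sub>R x)))"
    by (rule integrable_scaleR_right)
  then show ?thesis using c by simp
qed

lemma integrable_affine_iff: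
  fixes f :: "'a::euclidean_space \<Rightarrow> real"
  assumes c: "c \<noteq> 0"
  shows "integrable lebesgue (\<lambda>x. f (t + c *\<^sub>R x)) \<longleftrightarrow> integrable lebesgue f"
proof
  assume "integrable lebesgue (\<lambda>x. f (t + c *\<^sub>R x))"
  from integrable_affine_imp[OF this, of "1/c" "- t /\<^sub>R c"] c
  show "integrable lebesgue f" by (simp add: algebra_simps)
qed (use integrable_affine_imp c in auto)

lemma integral_affine:
  fixes f :: "'a::euclidean_space \<Rightarrow> real"
  assumes c: "c \<noteq> 0"
  shows "integral\<^sup>L lebesgue f = \<bar>c\<bar> ^ DIM('a) * integral\<^sup>L lebesgue (\<lambda>x. f (t + c *\<^sub>R x))"
proof cases
  assume f: "integrable lebesgue f"
  have m: "(\<lambda>x. t + c *\<^sub>R x) \<in> lebesgue \<rightarrow>\<^sub>M lebesgue" using lebesgue_affine_scale[OF c] by blast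
  have "integral\<^sup>L lebesgue f = integral\<^sup>L (density (distr lebesgue lebesgue (\<lambda>x. t + c *\<^sub>R x)) (\<lambda>_. \<bar>c\<bar> ^ DIM('a))) f"
    using lebesgue_affine_scale(1)[OF c, of t] by simp
  also have "\<dots> = integral\<^sup>L (distr lebesgue lebesgue (\<lambda>x. t + c *\<^sub>R x)) (\<lambda>x. \<bar>c\<bar> ^ DIM('a) *\<^sub>R f x)"
    using f by (subst integral_density) (auto intro: borel_measurable_integrable)
  also have "\<dots> = integral\<^sup>L lebesgue (\<lambda>x. \<bar>c\<bar> ^ DIM('a) *\<^sub>R f (t + c *\<^sub>R x))"
    using m f by (subst integral_distr) (auto simp: borel_measurable_integrable)
  finally show ?thesis by simp
next
  assume "\<not> integrable lebesgue f" with c show ?thesis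
    by (simp add: integrable_affine_iff not_integrable_integral_eq)
qed


lemma borel_imp_lebesgue_measurable:
  fixes f :: "'a::euclidean_space \<Rightarrow> 'b::euclidean_space"
  assumes "f \<in> borel_measurable borel" shows "f \<in> borel_measurable lebesgue"
proof -
  have "f \<in> borel_measurable lborel" using assms by simp
  then show ?thesis by (rule measurable_completion)
qed

lemma set_integral_affine:
  fixes f :: "'a::euclidean_space \<Rightarrow> real"
  assumes r: "r > 0"
  shows "set_integrable lebesgue ((\<lambda>y. a + r *\<^sub>R y) ` S) (\<lambda>x. f ((x - a) /\<^sub>R r)) \<longleftrightarrow> set_integrable lebesgue S f"
    and "(LINT x:((\<lambda>y. a + r *\<^sub>R y) ` S)|lebesgue. f ((x - a) /\<^sub>R r)) = r ^ DIM('a) * (LINT y:S|lebesgue. f y)"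
proof -
  define g where "g x = indicator ((\<lambda>y. a + r *\<^sub>R y) ` S) x *\<^sub>R f ((x - a) /\<^sub>R r)" for x
  have g: "g (a + r *\<^sub>R y) = indicator S y *\<^sub>R f y" for y
  proof -
    have "a + r *\<^sub>R y \<in> (\<lambda>y. a + r *\<^sub>R y) ` S \<longleftrightarrow> y \<in> S"
      using r by (auto simp: image_iff)
    then show ?thesis using r by (simp add: g_def indicator_def)
  qed
  have "set_integrable lebesgue ((\<lambda>y. a + r *\<^sub>R y) ` S) (\<lambda>x. f ((x - a) /\<^sub>R r)) \<longleftrightarrow> integrable lebesgue g"
    by (simp add: set_integrable_def g_def[abs_def])
  also have "\<dots> \<longleftrightarrow> integrable lebesgue (\<lambda>y. g (a + r *\<^sub>R y))"
    using integrable_affine_iff[of r g a] r by simp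
  also have "\<dots> \<longleftrightarrow> set_integrable lebesgue S f"
    by (simp add: g set_integrable_def)
  finally show "set_integrable lebesgue ((\<lambda>y. a + r *\<^sub>R y) ` S) (\<lambda>x. f ((x - a) /\<^sub>R r)) \<longleftrightarrow> set_integrable lebesgue S f" .
  have "(LINT x:((\<lambda>y. a + r *\<^sub>R y) ` S)|lebesgue. f ((x - a) /\<^sub>R r)) = integral\<^sup>L lebesgue g"
    by (simp add: set_lebesgue_integral_def g_def[abs_def])
  also have "\<dots> = \<bar>r\<bar> ^ DIM('a) * integral\<^sup>L lebesgue (\<lambda>y. g (a + r *\<^sub>R y))"
    using integral_affine[of r g a] r by simp
  also have "\<dots> = r ^ DIM('a) * (LINT y:S|lebesgue. f y)"
    using r by (simp add: g set_lebesgue_integral_def)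
  finally show "(LINT x:((\<lambda>y. a + r *\<^sub>R y) ` S)|lebesgue. f ((x - a) /\<^sub>R r)) = r ^ DIM('a) * (LINT y:S|lebesgue. f y)" .
qed

lemma in_ball_scale:
  fixes a x :: "'a::euclidean_space"
  assumes "r > 0"
  shows "(x - a) /\<^sub>R r \<in> ball 0 1 \<longleftrightarrow> x \<in> ball a r"
proof -
  have "norm ((x - a) /\<^sub>R r) = norm (x - a) / r" using assms by (simp add: divide_inverse_commute)
  then show ?thesis using assms by (simp add: dist_norm norm_minus_commute divide_less_eq)
qed

lemma image_ball_scale:
  fixes a :: "'a::euclidean_space"
  assumes "r > 0"
  shows "(\<lambda>y. a + r *\<^sub>R y) ` ball 0 1 = ball a r"
proof -
  have "x \<in> (\<lambda>y. a + r *\<^sub>R y) ` ball 0 1 \<longleftrightarrow> x \<in> ball a r" for x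
  proof -
    have e: "(a + r *\<^sub>R y - a) /\<^sub>R r = y" for y using assms by simp
    have "x \<in> (\<lambda>y. a + r *\<^sub>R y) ` ball 0 1 \<longleftrightarrow> (x - a) /\<^sub>R r \<in> ball 0 1"
    proof
      assume "x \<in> (\<lambda>y. a + r *\<^sub>R y) ` ball 0 1"
      then obtain y where "y \<in> ball 0 1" "x = a + r *\<^sub>R y" by blast
      then show "(x - a) /\<^sub>R r \<in> ball 0 1" using e by simp
    next
      assume "(x - a) /\<^sub>R r \<in> ball 0 1"
      moreover have "x = a + r *\<^sub>R ((x - a) /\<^sub>R r)" using assms by simp
      ultimately show "x \<in> (\<lambda>y. a + r *\<^sub>R y) ` ball 0 1" by blast
    qed
    then show ?thesis using in_ball_scale[OF assms] by simp
  qed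
  then show ?thesis by blast
qed

definition sc :: "real^'n::finite \<Rightarrow> real \<Rightarrow> (real^'n \<Rightarrow> 'b::zero) \<Rightarrow> real^'n \<Rightarrow> 'b" where
  "sc a r f x = (if x \<in> ball a r then f ((x - a) /\<^sub>R r) else 0)"

lemma sc_measurable:
  fixes f :: "real^'n::finite \<Rightarrow> 'b::euclidean_space"
  assumes f: "f \<in> borel_measurable (lebesgue_on B1)" and r: "r > 0"
  shows "sc a r f \<in> borel_measurable lebesgue"
proof -
  define F where "F x = (if x \<in> B1 then f x else 0)" for x
  have "F \<in> borel_measurable lebesgue"
    unfolding F_def by (rule borel_measurable_if_I[OF f]) simp
  then have "(\<lambda>x. F ((- a /\<^sub>R r) + (1/r) *\<^sub>R x)) \<in> borel_measurable lebesgue"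
    using r by (intro borel_measurable_affine) auto
  moreover have "(\<lambda>x. F ((- a /\<^sub>R r) + (1/r) *\<^sub>R x)) = sc a r f"
  proof
    fix x
    have e: "(- a /\<^sub>R r) + (1/r) *\<^sub>R x = (x - a) /\<^sub>R r"
      by (simp add: algebra_simps inverse_eq_divide)
    show "F ((- a /\<^sub>R r) + (1/r) *\<^sub>R x) = sc a r f x"
      unfolding e F_def sc_def using in_ball_scale[OF r, of x a] by simp
  qed
  ultimately show ?thesis by simp
qed


abbreviation pd :: "(real^'n::finite \<Rightarrow> real^'m::finite) \<Rightarrow> 'n \<Rightarrow> real^'n \<Rightarrow> real^'m" where
  "pd f i \<equiv> (\<lambda>x. frechet_derivative f (at x) (axis i 1))"

lemma affine_has_derivative:
  fixes f :: "real^'n::finite \<Rightarrow> real^'m::finite"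
  assumes "f differentiable at (s *\<^sub>R x + b)"
  shows "((\<lambda>x. c *\<^sub>R f (s *\<^sub>R x + b)) has_derivative
           (\<lambda>v. (c * s) *\<^sub>R frechet_derivative f (at (s *\<^sub>R x + b)) v)) (at x)"
proof -
  let ?D = "frechet_derivative f (at (s *\<^sub>R x + b))"
  have D: "(f has_derivative ?D) (at (s *\<^sub>R x + b))"
    using assms frechet_derivative_works by blast
  have A: "((\<lambda>x. s *\<^sub>R x + b) has_derivative (\<lambda>v. s *\<^sub>R v)) (at x)"
    by (auto intro!: derivative_eq_intros)
  have "((\<lambda>x. f (s *\<^sub>R x + b)) has_derivative (\<lambda>v. ?D (s *\<^sub>R v))) (at x)"
    using has_derivative_compose[OF A D] .
  then have "((\<lambda>x. c *\<^sub>R f (s *\<^sub>R x + b)) has_derivative (\<lambda>v. c *\<^sub>R ?D (s *\<^sub>R v))) (at x)"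
    by (rule has_derivative_scaleR_right)
  moreover have "(\<lambda>v. c *\<^sub>R ?D (s *\<^sub>R v)) = (\<lambda>v. (c * s) *\<^sub>R ?D v)"
    using linear_cmul[OF has_derivative_linear[OF D]] by auto
  ultimately show ?thesis by simp
qed

lemma smooth_map_affine:
  fixes f :: "real^'n::finite \<Rightarrow> real^'m::finite"
  assumes "smooth_map f"
  shows "smooth_map (\<lambda>x. c *\<^sub>R f (s *\<^sub>R x + b))"
proof -
  define X where "X g \<longleftrightarrow> (\<exists>f c s b. smooth_map f \<and> g = (\<lambda>x::real^'n. c *\<^sub>R f (s *\<^sub>R x + b) :: real^'m))" for g
  have "X (\<lambda>x. c *\<^sub>R f (s *\<^sub>R x + b))" using assms unfolding X_def by blast
  then show ?thesis
  proof (rule smooth_map.coinduct[of X])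
    fix g assume "X g"
    then obtain f c s b where f: "smooth_map f" and g: "g = (\<lambda>x. c *\<^sub>R f (s *\<^sub>R x + b))"
      unfolding X_def by blast
    from f have diff: "\<forall>x. f differentiable at x" and sm: "\<forall>i. smooth_map (pd f i)"
      by (auto elim: smooth_map.cases)
    have der: "frechet_derivative g (at x) = (\<lambda>v. (c * s) *\<^sub>R frechet_derivative f (at (s *\<^sub>R x + b)) v)" for x
      unfolding g using affine_has_derivative[of f s x b c] diff
      by (intro frechet_derivative_at[symmetric]) auto
    have "g differentiable at x" for x
      unfolding g using affine_has_derivative[of f s x b c] diff differentiable_def by blast
    moreover have "X (pd g i)" for i
      unfolding X_def der using sm by blast
    ultimately show "\<exists>f. g = f \<and> (\<forall>x. f differentiable at x) \<and> (\<forall>i. X (pd f i) \<or> smooth_map (pd f i))" by blast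
  qed
qed

lemma smooth_map_add:
  fixes f g :: "real^'n::finite \<Rightarrow> real^'m::finite"
  assumes "smooth_map f" "smooth_map g"
  shows "smooth_map (\<lambda>x. f x + g x)"
proof -
  define X where "X h \<longleftrightarrow> (\<exists>f g. smooth_map f \<and> smooth_map g \<and> h = (\<lambda>x::real^'n. f x + g x :: real^'m))" for h
  have "X (\<lambda>x. f x + g x)" using assms unfolding X_def by blast
  then show ?thesis
  proof (rule smooth_map.coinduct[of X])
    fix h assume "X h"
    then obtain f g where f: "smooth_map f" and g: "smooth_map g" and h: "h = (\<lambda>x. f x + g x)"
      unfolding X_def by blast
    from f have diff: "\<forall>x. f differentiable at x" and sm: "\<forall>i. smooth_map (pd f i)"
      by (auto elim: smooth_map.cases)
    from g have diffg: "\<forall>x. g differentiable at x" and smg: "\<forall>i. smooth_map (pd g i)"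
      by (auto elim: smooth_map.cases)
    have D: "(h has_derivative (\<lambda>v. frechet_derivative f (at x) v + frechet_derivative g (at x) v)) (at x)" for x
      unfolding h using diff diffg frechet_derivative_works by (blast intro: has_derivative_add)
    have der: "frechet_derivative h (at x) = (\<lambda>v. frechet_derivative f (at x) v + frechet_derivative g (at x) v)" for x
      using D by (intro frechet_derivative_at[symmetric])
    have "h differentiable at x" for x using D differentiable_def by blast
    moreover have "X (pd h i)" for i
      unfolding X_def der using sm smg by blast
    ultimately show "\<exists>f. h = f \<and> (\<forall>x. f differentiable at x) \<and> (\<forall>i. X (pd f i) \<or> smooth_map (pd f i))" by blast
  qed
qed

lemma jac_affine:
  fixes f :: "real^'n::finite \<Rightarrow> real^'m::finite"
  assumes "smooth_map f"
  shows "jac (\<lambda>x. c *\<^sub>R f (s *\<^sub>R x + b)) x = (c * s) *\<^sub>R jac f (s *\<^sub>R x + b)"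
proof -
  have diff: "\<forall>x. f differentiable at x" using assms by (auto elim: smooth_map.cases)
  have "frechet_derivative (\<lambda>x. c *\<^sub>R f (s *\<^sub>R x + b)) (at x) = (\<lambda>v. (c * s) *\<^sub>R frechet_derivative f (at (s *\<^sub>R x + b)) v)"
    using affine_has_derivative[of f s x b c] diff by (intro frechet_derivative_at[symmetric]) auto
  then show ?thesis unfolding jac_def by (simp add: matrix_def vec_eq_iff)
qed

lemma jac_add:
  fixes f g :: "real^'n::finite \<Rightarrow> real^'m::finite"
  assumes "smooth_map f" "smooth_map g"
  shows "jac (\<lambda>x. f x + g x) x = jac f x + jac g x"
proof -
  have diff: "\<forall>x. f differentiable at x" "\<forall>x. g differentiable at x" using assms by (auto elim: smooth_map.cases)
  have D: "((\<lambda>x. f x + g x) has_derivative (\<lambda>v. frechet_derivative f (at x) v + frechet_derivative g (at x) v)) (at x)"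
    using diff frechet_derivative_works by (blast intro: has_derivative_add)
  then have "frechet_derivative (\<lambda>x. f x + g x) (at x) = (\<lambda>v. frechet_derivative f (at x) v + frechet_derivative g (at x) v)"
    by (intro frechet_derivative_at[symmetric])
  then show ?thesis unfolding jac_def by (simp add: matrix_def vec_eq_iff)
qed


lemma smooth_cont:
  fixes f :: "real^'n::finite \<Rightarrow> real^'m::finite"
  assumes "smooth_map f" shows "continuous_on UNIV f"
proof -
  have "\<forall>x. f differentiable at x" using assms by (auto elim: smooth_map.cases)
  then show ?thesis
    by (meson continuous_at_imp_continuous_on differentiable_imp_continuous_within)
qed

lemma jac_eq_pd: "jac f x = (\<chi> i j. pd f j x $ i)"
  unfolding jac_def matrix_def by simp

lemma jac_cont:
  fixes f :: "real^'n::finite \<Rightarrow> real^'m::finite"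
  assumes "smooth_map f" shows "continuous_on UNIV (jac f)"
proof -
  have sm: "smooth_map (pd f j)" for j using assms by (auto elim: smooth_map.cases)
  have c: "continuous_on UNIV (\<lambda>x. pd f j x $ i)" for i j
    using smooth_cont[OF sm] by (intro continuous_intros)
  show ?thesis unfolding jac_eq_pd
    by (intro continuous_on_vec_lambda c)
qed

lemma pow_ineq:
  fixes a b :: "'b::real_normed_vector"
  assumes p: "0 \<le> p"
  shows "norm (a + b) powr p \<le> 2 powr p * (norm a powr p + norm b powr p)"
proof -
  define m where "m = max (norm a) (norm b)"
  have "norm (a + b) \<le> 2 * m" unfolding m_def using norm_triangle_ineq[of a b] by linarith
  then have "norm (a + b) powr p \<le> (2 * m) powr p" using p by (intro powr_mono2) auto
  also have "\<dots> = 2 powr p * m powr p" using m_def by (simp add: powr_mult)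
  also have "m powr p \<le> norm a powr p + norm b powr p" unfolding m_def
    by (cases "norm a \<le> norm b") (auto simp: max_def)
  then have "2 powr p * m powr p \<le> 2 powr p * (norm a powr p + norm b powr p)"
    by (intro mult_left_mono) auto
  finally show ?thesis .
qed

lemma sint_iff:
  fixes F :: "real^'n::finite \<Rightarrow> real"
  shows "set_integrable lebesgue B1 F \<longleftrightarrow> integrable (lebesgue_on B1) F"
  unfolding set_integrable_def by (subst integrable_restrict_space) auto

lemma cont_meas:
  fixes f :: "real^'n::finite \<Rightarrow> 'b::euclidean_space"
  assumes "continuous_on UNIV f" shows "f \<in> borel_measurable (lebesgue_on S)"
  using borel_imp_lebesgue_measurable[OF borel_measurable_continuous_onI[OF assms]]
  by (rule measurable_restrict_space1)

lemma sint_add: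
  fixes f g :: "real^'n::finite \<Rightarrow> 'b::euclidean_space"
  assumes f: "f \<in> borel_measurable (lebesgue_on B1)" and g: "g \<in> borel_measurable (lebesgue_on B1)"
    and fi: "set_integrable lebesgue B1 (\<lambda>x. norm (f x) powr p)"
    and gi: "set_integrable lebesgue B1 (\<lambda>x. norm (g x) powr p)" and p: "0 \<le> p"
  shows "set_integrable lebesgue B1 (\<lambda>x. norm (f x + g x) powr p)"
  unfolding sint_iff
proof (rule Bochner_Integration.integrable_bound[where f="\<lambda>x. 2 powr p * (norm (f x) powr p + norm (g x) powr p)"])
  show "integrable (lebesgue_on B1) (\<lambda>x. 2 powr p * (norm (f x) powr p + norm (g x) powr p))"
    using fi gi unfolding sint_iff by auto
  show "(\<lambda>x. norm (f x + g x) powr p) \<in> borel_measurable (lebesgue_on B1)"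
    using f g by measurable
  show "AE x in lebesgue_on B1. norm (norm (f x + g x) powr p) \<le> norm (2 powr p * (norm (f x) powr p + norm (g x) powr p))"
    using pow_ineq[OF p] by (auto intro!: AE_I2)
qed

lemma sint_cont:
  fixes f :: "real^'n::finite \<Rightarrow> 'b::euclidean_space"
  assumes f: "continuous_on UNIV f" and p: "0 \<le> p"
  shows "set_integrable lebesgue B1 (\<lambda>x. norm (f x) powr p)"
proof -
  have "compact (f ` cball 0 1)"
    by (rule compact_continuous_image[OF continuous_on_subset[OF f]]) auto
  then have "bounded (f ` cball 0 1)" by (rule compact_imp_bounded)
  then obtain M where "\<forall>y\<in>f ` cball 0 1. norm y \<le> M" unfolding bounded_iff by blast
  then have M: "\<And>x. x \<in> cball 0 1 \<Longrightarrow> norm (f x) \<le> M" by blast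
  interpret finite_measure "lebesgue_on (B1::(real^'n) set)"
    by (rule finite_measure_lebesgue_on) simp
  show ?thesis unfolding sint_iff
  proof (rule Bochner_Integration.integrable_bound)
    show "integrable (lebesgue_on B1) (\<lambda>x::real^'n. M powr p)" by simp
    show "(\<lambda>x. norm (f x) powr p) \<in> borel_measurable (lebesgue_on B1)"
      using cont_meas[OF f] by measurable
    have "norm (f x) powr p \<le> M powr p" if "x \<in> B1" for x
      using M[of x] that p by (intro powr_mono2) auto
    then show "AE x in lebesgue_on B1. norm (norm (f x) powr p) \<le> norm (M powr p)"
      by (intro AE_I2) auto
  qed
qed


lemma norm_scale_powr: "norm (c *\<^sub>R v) powr p = \<bar>c\<bar> powr p * norm v powr p"
  by (simp add: powr_mult)

lemma smooth_map_scale: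
  fixes f :: "real^'n::finite \<Rightarrow> real^'m::finite"
  assumes "smooth_map f" shows "smooth_map (\<lambda>x. c *\<^sub>R f x)"
  using smooth_map_affine[OF assms, of c 1 0] by simp

lemma jac_scale:
  fixes f :: "real^'n::finite \<Rightarrow> real^'m::finite"
  assumes "smooth_map f" shows "jac (\<lambda>x. c *\<^sub>R f x) x = c *\<^sub>R jac f x"
  using jac_affine[OF assms, of c 1 0] by simp

lemma W0_scale:
  fixes u :: "real^'n::finite \<Rightarrow> real^'m::finite"
  assumes W: "W0 p u G"
  shows "W0 p (\<lambda>x. c *\<^sub>R u x) (\<lambda>x. c *\<^sub>R G x)"
proof -
  from W obtain \<phi> :: "nat \<Rightarrow> real^'n \<Rightarrow> real^'m" where
    um: "u \<in> borel_measurable (lebesgue_on B1)" and Gm: "G \<in> borel_measurable (lebesgue_on B1)"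
    and ui: "set_integrable lebesgue B1 (\<lambda>x. norm (u x) powr p)"
    and Gi: "set_integrable lebesgue B1 (\<lambda>x. norm (G x) powr p)"
    and ph: "\<And>k. smooth_map (\<phi> k) \<and> compact (closure {x. \<phi> k x \<noteq> 0}) \<and> closure {x. \<phi> k x \<noteq> 0} \<subseteq> B1"
    and l1: "(\<lambda>k. LINT x:B1|lebesgue. norm (\<phi> k x - u x) powr p) \<longlonglongrightarrow> 0"
    and l2: "(\<lambda>k. LINT x:B1|lebesgue. norm (jac (\<phi> k) x - G x) powr p) \<longlonglongrightarrow> 0"
    unfolding W0_def by blast
  define \<psi> where "\<psi> k x = c *\<^sub>R \<phi> k x" for k x
  have sm: "smooth_map (\<psi> k)" for k
    unfolding \<psi>_def[abs_def] using ph smooth_map_scale by blast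
  have supp: "compact (closure {x. \<psi> k x \<noteq> 0}) \<and> closure {x. \<psi> k x \<noteq> 0} \<subseteq> B1" for k
  proof (cases "c = 0")
    case True then show ?thesis by (simp add: \<psi>_def)
  next
    case False
    then have "{x. \<psi> k x \<noteq> 0} = {x. \<phi> k x \<noteq> 0}" by (auto simp: \<psi>_def)
    then show ?thesis using ph by simp
  qed
  have e1: "(LINT x:B1|lebesgue. norm (\<psi> k x - c *\<^sub>R u x) powr p) = \<bar>c\<bar> powr p * (LINT x:B1|lebesgue. norm (\<phi> k x - u x) powr p)" for k
  proof -
    have "norm (\<psi> k x - c *\<^sub>R u x) powr p = \<bar>c\<bar> powr p * norm (\<phi> k x - u x) powr p" for x
      unfolding \<psi>_def scaleR_diff_right[symmetric] by (rule norm_scale_powr)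
    then show ?thesis by simp
  qed
  have e2: "(LINT x:B1|lebesgue. norm (jac (\<psi> k) x - c *\<^sub>R G x) powr p) = \<bar>c\<bar> powr p * (LINT x:B1|lebesgue. norm (jac (\<phi> k) x - G x) powr p)" for k
  proof -
    have "norm (jac (\<psi> k) x - c *\<^sub>R G x) powr p = \<bar>c\<bar> powr p * norm (jac (\<phi> k) x - G x) powr p" for x
      unfolding \<psi>_def[abs_def] jac_scale[OF ph[THEN conjunct1]] scaleR_diff_right[symmetric] by (rule norm_scale_powr)
    then show ?thesis by simp
  qed
  show ?thesis unfolding W0_def
  proof (intro conjI exI[of _ \<psi>])
    show "(\<lambda>x. c *\<^sub>R u x) \<in> borel_measurable (lebesgue_on B1)" using um by measurable
    show "(\<lambda>x. c *\<^sub>R G x) \<in> borel_measurable (lebesgue_on B1)" using Gm by measurable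
    show "set_integrable lebesgue B1 (\<lambda>x. norm (c *\<^sub>R u x) powr p)"
      unfolding norm_scale_powr using ui by (rule set_integrable_mult_right)
    show "set_integrable lebesgue B1 (\<lambda>x. norm (c *\<^sub>R G x) powr p)"
      unfolding norm_scale_powr using Gi by (rule set_integrable_mult_right)
    show "\<forall>k. smooth_map (\<psi> k) \<and> compact (closure {x. \<psi> k x \<noteq> 0}) \<and> closure {x. \<psi> k x \<noteq> 0} \<subseteq> B1"
      using sm supp by blast
    show "(\<lambda>k. LINT x:B1|lebesgue. norm (\<psi> k x - c *\<^sub>R u x) powr p) \<longlonglongrightarrow> 0"
      unfolding e1 using tendsto_mult_right_zero[OF l1] by simp
    show "(\<lambda>k. LINT x:B1|lebesgue. norm (jac (\<psi> k) x - c *\<^sub>R G x) powr p) \<longlonglongrightarrow> 0"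
      unfolding e2 using tendsto_mult_right_zero[OF l2] by simp
  qed
qed


lemma diff_int:
  fixes f u :: "real^'n::finite \<Rightarrow> 'b::euclidean_space"
  assumes f: "continuous_on UNIV f" and um: "u \<in> borel_measurable (lebesgue_on B1)"
    and ui: "set_integrable lebesgue B1 (\<lambda>x. norm (u x) powr p)" and p: "0 \<le> p"
  shows "set_integrable lebesgue B1 (\<lambda>x. norm (f x - u x) powr p)"
proof -
  have "set_integrable lebesgue B1 (\<lambda>x. norm (f x + - u x) powr p)"
    using sint_add[OF cont_meas[OF f], of "\<lambda>x. - u x" p] um ui sint_cont[OF f p]
    by (simp add: borel_measurable_uminus p)
  then show ?thesis by simp
qed

lemma lim_add:
  fixes fa fb ua ub :: "nat \<Rightarrow> real^'n::finite \<Rightarrow> 'b::euclidean_space"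
  assumes i1: "\<And>k. set_integrable lebesgue B1 (\<lambda>x. norm (fa k x - ua k x) powr p)"
    and i2: "\<And>k. set_integrable lebesgue B1 (\<lambda>x. norm (fb k x - ub k x) powr p)"
    and m1: "\<And>k. (\<lambda>x. fa k x - ua k x) \<in> borel_measurable (lebesgue_on B1)"
    and m2: "\<And>k. (\<lambda>x. fb k x - ub k x) \<in> borel_measurable (lebesgue_on B1)"
    and l1: "(\<lambda>k. LINT x:B1|lebesgue. norm (fa k x - ua k x) powr p) \<longlonglongrightarrow> 0"
    and l2: "(\<lambda>k. LINT x:B1|lebesgue. norm (fb k x - ub k x) powr p) \<longlonglongrightarrow> 0"
    and p: "0 \<le> p"
  shows "(\<lambda>k. LINT x:B1|lebesgue. norm ((fa k x + fb k x) - (ua k x + ub k x)) powr p) \<longlonglongrightarrow> 0"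
proof (rule tendsto_sandwich[where f="\<lambda>_. 0" and h="\<lambda>k. 2 powr p * ((LINT x:B1|lebesgue. norm (fa k x - ua k x) powr p) + (LINT x:B1|lebesgue. norm (fb k x - ub k x) powr p))"])
  have eq: "(fa k x + fb k x) - (ua k x + ub k x) = (fa k x - ua k x) + (fb k x - ub k x)" for k x
    by (simp add: algebra_simps)
  show "\<forall>\<^sub>F k in sequentially. 0 \<le> (LINT x:B1|lebesgue. norm ((fa k x + fb k x) - (ua k x + ub k x)) powr p)"
    unfolding set_lebesgue_integral_def by (intro always_eventually allI integral_nonneg_AE AE_I2) (auto simp: indicator_def)
  show "\<forall>\<^sub>F k in sequentially. (LINT x:B1|lebesgue. norm ((fa k x + fb k x) - (ua k x + ub k x)) powr p) \<le>
     2 powr p * ((LINT x:B1|lebesgue. norm (fa k x - ua k x) powr p) + (LINT x:B1|lebesgue. norm (fb k x - ub k x) powr p))"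
  proof (intro always_eventually allI)
    fix k
    have "(LINT x:B1|lebesgue. norm ((fa k x + fb k x) - (ua k x + ub k x)) powr p) \<le>
       (LINT x:B1|lebesgue. 2 powr p * (norm (fa k x - ua k x) powr p + norm (fb k x - ub k x) powr p))"
      unfolding eq
    proof (rule set_integral_mono)
      show "set_integrable lebesgue B1 (\<lambda>x. norm (fa k x - ua k x + (fb k x - ub k x)) powr p)"
        using sint_add[OF m1 m2 i1 i2 p] .
      show "set_integrable lebesgue B1 (\<lambda>x. 2 powr p * (norm (fa k x - ua k x) powr p + norm (fb k x - ub k x) powr p))"
        using i1 i2 by (intro set_integrable_mult_right set_integral_add(1))
    qed (rule pow_ineq[OF p])
    also have "\<dots> = 2 powr p * ((LINT x:B1|lebesgue. norm (fa k x - ua k x) powr p) + (LINT x:B1|lebesgue. norm (fb k x - ub k x) powr p))"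
      using i1 i2 by (simp add: set_integral_add)
    finally show "(LINT x:B1|lebesgue. norm ((fa k x + fb k x) - (ua k x + ub k x)) powr p) \<le>
     2 powr p * ((LINT x:B1|lebesgue. norm (fa k x - ua k x) powr p) + (LINT x:B1|lebesgue. norm (fb k x - ub k x) powr p))" .
  qed
  show "(\<lambda>k. 0::real) \<longlonglongrightarrow> 0" by simp
  show "(\<lambda>k. 2 powr p * ((LINT x:B1|lebesgue. norm (fa k x - ua k x) powr p) + (LINT x:B1|lebesgue. norm (fb k x - ub k x) powr p))) \<longlonglongrightarrow> 0"
    using tendsto_mult_right_zero[OF tendsto_add_zero[OF l1 l2]] by simp
qed


lemma W0_unfold:
  fixes u :: "real^'n::finite \<Rightarrow> real^'m::finite"
  assumes "W0 p u G"
  obtains \<phi> :: "nat \<Rightarrow> real^'n \<Rightarrow> real^'m" where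
    "u \<in> borel_measurable (lebesgue_on B1)" "G \<in> borel_measurable (lebesgue_on B1)"
    "set_integrable lebesgue B1 (\<lambda>x. norm (u x) powr p)"
    "set_integrable lebesgue B1 (\<lambda>x. norm (G x) powr p)"
    "\<And>k. smooth_map (\<phi> k)" "\<And>k. compact (closure {x. \<phi> k x \<noteq> 0})" "\<And>k. closure {x. \<phi> k x \<noteq> 0} \<subseteq> B1"
    "(\<lambda>k. LINT x:B1|lebesgue. norm (\<phi> k x - u x) powr p) \<longlonglongrightarrow> 0"
    "(\<lambda>k. LINT x:B1|lebesgue. norm (jac (\<phi> k) x - G x) powr p) \<longlonglongrightarrow> 0"
  using assms unfolding W0_def by blast

lemma W0_add:
  fixes u1 u2 :: "real^'n::finite \<Rightarrow> real^'m::finite"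
  assumes W1: "W0 p u1 G1" and W2: "W0 p u2 G2" and p: "0 \<le> p"
  shows "W0 p (\<lambda>x. u1 x + u2 x) (\<lambda>x. G1 x + G2 x)"
proof -
  obtain \<phi>1 where um1: "u1 \<in> borel_measurable (lebesgue_on B1)" and Gm1: "G1 \<in> borel_measurable (lebesgue_on B1)"
    and ui1: "set_integrable lebesgue B1 (\<lambda>x. norm (u1 x) powr p)"
    and Gi1: "set_integrable lebesgue B1 (\<lambda>x. norm (G1 x) powr p)"
    and sm1: "\<And>k. smooth_map (\<phi>1 k)" and c1: "\<And>k. compact (closure {x. \<phi>1 k x \<noteq> 0})"
    and s1: "\<And>k. closure {x. \<phi>1 k x \<noteq> 0} \<subseteq> B1"
    and l1: "(\<lambda>k. LINT x:B1|lebesgue. norm (\<phi>1 k x - u1 x) powr p) \<longlonglongrightarrow> 0"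
    and j1: "(\<lambda>k. LINT x:B1|lebesgue. norm (jac (\<phi>1 k) x - G1 x) powr p) \<longlonglongrightarrow> 0"
    using W0_unfold[OF W1] by blast
  obtain \<phi>2 where um2: "u2 \<in> borel_measurable (lebesgue_on B1)" and Gm2: "G2 \<in> borel_measurable (lebesgue_on B1)"
    and ui2: "set_integrable lebesgue B1 (\<lambda>x. norm (u2 x) powr p)"
    and Gi2: "set_integrable lebesgue B1 (\<lambda>x. norm (G2 x) powr p)"
    and sm2: "\<And>k. smooth_map (\<phi>2 k)" and c2: "\<And>k. compact (closure {x. \<phi>2 k x \<noteq> 0})"
    and s2: "\<And>k. closure {x. \<phi>2 k x \<noteq> 0} \<subseteq> B1"
    and l2: "(\<lambda>k. LINT x:B1|lebesgue. norm (\<phi>2 k x - u2 x) powr p) \<longlonglongrightarrow> 0"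
    and j2: "(\<lambda>k. LINT x:B1|lebesgue. norm (jac (\<phi>2 k) x - G2 x) powr p) \<longlonglongrightarrow> 0"
    using W0_unfold[OF W2] by blast
  define \<psi> where "\<psi> k x = \<phi>1 k x + \<phi>2 k x" for k x
  have sm: "smooth_map (\<psi> k)" for k
    unfolding \<psi>_def[abs_def] using sm1 sm2 smooth_map_add by blast
  have sub: "closure {x. \<psi> k x \<noteq> 0} \<subseteq> closure {x. \<phi>1 k x \<noteq> 0} \<union> closure {x. \<phi>2 k x \<noteq> 0}" for k
  proof -
    have "{x. \<psi> k x \<noteq> 0} \<subseteq> {x. \<phi>1 k x \<noteq> 0} \<union> {x. \<phi>2 k x \<noteq> 0}"
      by (auto simp: \<psi>_def)
    also have "\<dots> \<subseteq> closure {x. \<phi>1 k x \<noteq> 0} \<union> closure {x. \<phi>2 k x \<noteq> 0}"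
      using closure_subset by (rule Un_mono) (rule closure_subset)
    finally have "{x. \<psi> k x \<noteq> 0} \<subseteq> closure {x. \<phi>1 k x \<noteq> 0} \<union> closure {x. \<phi>2 k x \<noteq> 0}" .
    then show ?thesis by (intro closure_minimal) auto
  qed
  have cpt: "compact (closure {x. \<psi> k x \<noteq> 0})" for k
  proof -
    have "closure {x. \<psi> k x \<noteq> 0} = (closure {x. \<phi>1 k x \<noteq> 0} \<union> closure {x. \<phi>2 k x \<noteq> 0}) \<inter> closure {x. \<psi> k x \<noteq> 0}"
      using sub by blast
    also have "compact \<dots>" using c1 c2 by (intro compact_Int_closed compact_Un) auto
    finally show ?thesis .
  qed
  have jac\<psi>: "jac (\<psi> k) x = jac (\<phi>1 k) x + jac (\<phi>2 k) x" for k x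
    unfolding \<psi>_def[abs_def] using jac_add[OF sm1 sm2] .
  show ?thesis unfolding W0_def
  proof (intro conjI exI[of _ \<psi>])
    show "(\<lambda>x. u1 x + u2 x) \<in> borel_measurable (lebesgue_on B1)" using um1 um2 by measurable
    show "(\<lambda>x. G1 x + G2 x) \<in> borel_measurable (lebesgue_on B1)" using Gm1 Gm2 by measurable
    show "set_integrable lebesgue B1 (\<lambda>x. norm (u1 x + u2 x) powr p)"
      by (rule sint_add[OF um1 um2 ui1 ui2 p])
    show "set_integrable lebesgue B1 (\<lambda>x. norm (G1 x + G2 x) powr p)"
      by (rule sint_add[OF Gm1 Gm2 Gi1 Gi2 p])
    show "\<forall>k. smooth_map (\<psi> k) \<and> compact (closure {x. \<psi> k x \<noteq> 0}) \<and> closure {x. \<psi> k x \<noteq> 0} \<subseteq> B1"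
    proof
      fix k
      have "closure {x. \<psi> k x \<noteq> 0} \<subseteq> B1"
        using sub[of k] s1[of k] s2[of k] by (meson Un_least order_trans)
      then show "smooth_map (\<psi> k) \<and> compact (closure {x. \<psi> k x \<noteq> 0}) \<and> closure {x. \<psi> k x \<noteq> 0} \<subseteq> B1"
        using sm cpt by blast
    qed
    show "(\<lambda>k. LINT x:B1|lebesgue. norm (\<psi> k x - (u1 x + u2 x)) powr p) \<longlonglongrightarrow> 0"
      unfolding \<psi>_def
      by (rule lim_add[where fa="\<lambda>k. \<phi>1 k" and ua="\<lambda>k. u1" and fb="\<lambda>k. \<phi>2 k" and ub="\<lambda>k. u2", OF
          diff_int[OF smooth_cont[OF sm1] um1 ui1 p] diff_int[OF smooth_cont[OF sm2] um2 ui2 p]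
          borel_measurable_diff[OF cont_meas[OF smooth_cont[OF sm1]] um1]
          borel_measurable_diff[OF cont_meas[OF smooth_cont[OF sm2]] um2] l1 l2 p])
    show "(\<lambda>k. LINT x:B1|lebesgue. norm (jac (\<psi> k) x - (G1 x + G2 x)) powr p) \<longlonglongrightarrow> 0"
      unfolding jac\<psi>
      by (rule lim_add[where fa="\<lambda>k. jac (\<phi>1 k)" and ua="\<lambda>k. G1" and fb="\<lambda>k. jac (\<phi>2 k)" and ub="\<lambda>k. G2", OF
          diff_int[OF jac_cont[OF sm1] Gm1 Gi1 p] diff_int[OF jac_cont[OF sm2] Gm2 Gi2 p]
          borel_measurable_diff[OF cont_meas[OF jac_cont[OF sm1]] Gm1]
          borel_measurable_diff[OF cont_meas[OF jac_cont[OF sm2]] Gm2] j1 j2 p])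
  qed
qed


lemma sc_int:
  fixes H :: "real^'n::finite \<Rightarrow> real"
  assumes r: "r > 0" and sub: "ball a r \<subseteq> B1"
  shows "set_integrable lebesgue B1 (\<lambda>x. if x \<in> ball a r then H ((x - a) /\<^sub>R r) else 0) \<longleftrightarrow> set_integrable lebesgue B1 H"
    and "(LINT x:B1|lebesgue. (if x \<in> ball a r then H ((x - a) /\<^sub>R r) else 0)) = r ^ DIM(real^'n) * (LINT y:B1|lebesgue. H y)"
proof -
  have eq: "indicator B1 x *\<^sub>R (if x \<in> ball a r then H ((x - a) /\<^sub>R r) else 0) = indicator ((\<lambda>y. a + r *\<^sub>R y) ` B1) x *\<^sub>R H ((x - a) /\<^sub>R r)" for x
  proof -
    have "x \<in> ball a r \<Longrightarrow> x \<in> B1" using sub by (rule subsetD)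
    then show ?thesis unfolding image_ball_scale[OF r] by (cases "x \<in> ball a r") (simp_all add: indicator_def)
  qed
  show "set_integrable lebesgue B1 (\<lambda>x. if x \<in> ball a r then H ((x - a) /\<^sub>R r) else 0) \<longleftrightarrow> set_integrable lebesgue B1 H"
    using set_integral_affine(1)[OF r, of a B1 H] unfolding set_integrable_def eq .
  show "(LINT x:B1|lebesgue. (if x \<in> ball a r then H ((x - a) /\<^sub>R r) else 0)) = r ^ DIM(real^'n) * (LINT y:B1|lebesgue. H y)"
    using set_integral_affine(2)[OF r, of a B1 H] unfolding set_lebesgue_integral_def eq .
qed

lemma smooth_zero_outside:
  fixes \<phi> :: "real^'n::finite \<Rightarrow> real^'m::finite"
  assumes "closure {x. \<phi> x \<noteq> 0} \<subseteq> B1" "y \<notin> B1"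
  shows "\<phi> y = 0" and "jac \<phi> y = 0"
proof -
  let ?S = "- closure {x. \<phi> x \<noteq> 0}"
  have "y \<notin> closure {x. \<phi> x \<noteq> 0}" using assms(1) assms(2) by (rule contra_subsetD)
  then have yS: "y \<in> ?S" by simp
  have z: "\<forall>x\<in>?S. \<phi> x = 0"
  proof
    fix x assume "x \<in> ?S"
    then have "x \<notin> closure {x. \<phi> x \<noteq> 0}" by simp
    then have "x \<notin> {x. \<phi> x \<noteq> 0}" using closure_subset by (rule contra_subsetD[rotated])
    then show "\<phi> x = 0" by simp
  qed
  show "\<phi> y = 0" using z yS by (rule bspec)
  have "((\<lambda>_. 0::real^'m) has_derivative (\<lambda>_. 0)) (at y)" by simp
  then have "(\<phi> has_derivative (\<lambda>_. 0)) (at y)"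
  proof (rule has_derivative_transform_within_open[where s="?S"])
    show "open ?S" by (rule open_Compl) simp
    show "y \<in> ?S" by (rule yS)
    show "(\<lambda>_. 0) x = \<phi> x" if "x \<in> ?S" for x using bspec[OF z that] by simp
  qed
  then have "frechet_derivative \<phi> (at y) = (\<lambda>_. 0)" by (rule frechet_derivative_at[symmetric])
  then show "jac \<phi> y = 0" unfolding jac_def by (simp add: matrix_def vec_eq_iff)
qed


lemma W0_sc:
  fixes u :: "real^'n::finite \<Rightarrow> real^'m::finite"
  assumes W: "W0 p u G" and r: "r > 0" and sub: "ball a r \<subseteq> B1"
  shows "W0 p (sc a r (\<lambda>y. r *\<^sub>R u y)) (sc a r G)"
proof -
  obtain \<phi> where um: "u \<in> borel_measurable (lebesgue_on B1)" and Gm: "G \<in> borel_measurable (lebesgue_on B1)"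
    and ui: "set_integrable lebesgue B1 (\<lambda>x. norm (u x) powr p)"
    and Gi: "set_integrable lebesgue B1 (\<lambda>x. norm (G x) powr p)"
    and sm: "\<And>k. smooth_map (\<phi> k)" and cp: "\<And>k. compact (closure {x. \<phi> k x \<noteq> 0})"
    and s1: "\<And>k. closure {x. \<phi> k x \<noteq> 0} \<subseteq> B1"
    and l1: "(\<lambda>k. LINT x:B1|lebesgue. norm (\<phi> k x - u x) powr p) \<longlonglongrightarrow> 0"
    and j1: "(\<lambda>k. LINT x:B1|lebesgue. norm (jac (\<phi> k) x - G x) powr p) \<longlonglongrightarrow> 0"
    using W0_unfold[OF W] by blast
  define \<psi> where "\<psi> k x = r *\<^sub>R \<phi> k ((1/r) *\<^sub>R x + (- ((1/r) *\<^sub>R a)))" for k x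
  have arg: "(1/r) *\<^sub>R x + (- ((1/r) *\<^sub>R a)) = (x - a) /\<^sub>R r" for x
    by (simp add: algebra_simps inverse_eq_divide)
  have \<psi>: "\<psi> k x = r *\<^sub>R \<phi> k ((x - a) /\<^sub>R r)" for k x
    unfolding \<psi>_def arg ..
  have smk: "smooth_map (\<psi> k)" for k
    unfolding \<psi>_def[abs_def] by (rule smooth_map_affine[OF sm])
  have jk: "jac (\<psi> k) x = jac (\<phi> k) ((x - a) /\<^sub>R r)" for k x
    unfolding \<psi>_def[abs_def] jac_affine[OF sm] using r by (simp only: arg) simp
  have out: "\<phi> k ((x - a) /\<^sub>R r) = 0" "jac (\<phi> k) ((x - a) /\<^sub>R r) = 0" if "x \<notin> ball a r" for k x
  proof -
    have "(x - a) /\<^sub>R r \<notin> B1" using in_ball_scale[OF r, of x a] that by simp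
    then show "\<phi> k ((x - a) /\<^sub>R r) = 0" "jac (\<phi> k) ((x - a) /\<^sub>R r) = 0"
      using smooth_zero_outside[OF s1] by auto
  qed
  have pw1: "norm (\<psi> k x - sc a r (\<lambda>y. r *\<^sub>R u y) x) powr p =
     (if x \<in> ball a r then r powr p * norm (\<phi> k ((x - a) /\<^sub>R r) - u ((x - a) /\<^sub>R r)) powr p else 0)" for k x
  proof (cases "x \<in> ball a r")
    case True
    have "norm (\<psi> k x - sc a r (\<lambda>y. r *\<^sub>R u y) x) powr p = norm (r *\<^sub>R (\<phi> k ((x - a) /\<^sub>R r) - u ((x - a) /\<^sub>R r))) powr p"
      using True by (simp add: \<psi> sc_def scaleR_diff_right)
    also have "\<dots> = r powr p * norm (\<phi> k ((x - a) /\<^sub>R r) - u ((x - a) /\<^sub>R r)) powr p"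
      unfolding norm_scale_powr using r by simp
    finally show ?thesis using True by simp
  next
    case False then show ?thesis using out[OF False] by (simp add: \<psi> sc_def)
  qed
  have pw2: "norm (jac (\<psi> k) x - sc a r G x) powr p =
     (if x \<in> ball a r then norm (jac (\<phi> k) ((x - a) /\<^sub>R r) - G ((x - a) /\<^sub>R r)) powr p else 0)" for k x
    using out[of x k] by (cases "x \<in> ball a r") (simp_all add: jk sc_def)
  have pw3: "norm (sc a r (\<lambda>y. r *\<^sub>R u y) x) powr p = (if x \<in> ball a r then r powr p * norm (u ((x - a) /\<^sub>R r)) powr p else 0)" for x
    using r by (simp add: sc_def powr_mult)
  have pw4: "norm (sc a r G x) powr p = (if x \<in> ball a r then norm (G ((x - a) /\<^sub>R r)) powr p else 0)" for x
    by (simp add: sc_def)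
  have supp: "compact (closure {x. \<psi> k x \<noteq> 0}) \<and> closure {x. \<psi> k x \<noteq> 0} \<subseteq> B1" for k
  proof -
    let ?K = "closure {x. \<phi> k x \<noteq> 0}"
    let ?T = "\<lambda>y. a + r *\<^sub>R y"
    have cK: "compact (?T ` ?K)"
      by (rule compact_continuous_image[OF _ cp]) (intro continuous_intros)
    have "{x. \<psi> k x \<noteq> 0} \<subseteq> ?T ` ?K"
    proof
      fix x assume "x \<in> {x. \<psi> k x \<noteq> 0}"
      then have "(x - a) /\<^sub>R r \<in> {x. \<phi> k x \<noteq> 0}" using r by (simp add: \<psi>)
      then have "(x - a) /\<^sub>R r \<in> ?K" using closure_subset by (rule subsetD[rotated])
      moreover have "x = ?T ((x - a) /\<^sub>R r)" using r by simp
      ultimately show "x \<in> ?T ` ?K" by (rule image_eqI[rotated])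
    qed
    then have cl: "closure {x. \<psi> k x \<noteq> 0} \<subseteq> ?T ` ?K"
      by (rule closure_minimal) (rule compact_imp_closed[OF cK])
    have "closure {x. \<psi> k x \<noteq> 0} = ?T ` ?K \<inter> closure {x. \<psi> k x \<noteq> 0}" using cl by (rule Int_absorb1[symmetric])
    also have "compact \<dots>" using cK by (rule compact_Int_closed) simp
    finally have c: "compact (closure {x. \<psi> k x \<noteq> 0})" .
    have "?T ` ?K \<subseteq> ?T ` B1" using s1 by (rule image_mono)
    also have "\<dots> = ball a r" by (rule image_ball_scale[OF r])
    finally have "closure {x. \<psi> k x \<noteq> 0} \<subseteq> B1" using cl sub by (meson order_trans)
    then show ?thesis using c by simp
  qed
  show ?thesis unfolding W0_def
  proof (intro conjI exI[of _ \<psi>])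
    have "(\<lambda>y. r *\<^sub>R u y) \<in> borel_measurable (lebesgue_on B1)" using um by measurable
    then show "sc a r (\<lambda>y. r *\<^sub>R u y) \<in> borel_measurable (lebesgue_on B1)"
      by (rule measurable_restrict_space1[OF sc_measurable[OF _ r]])
    show "sc a r G \<in> borel_measurable (lebesgue_on B1)"
      by (rule measurable_restrict_space1[OF sc_measurable[OF Gm r]])
    show "set_integrable lebesgue B1 (\<lambda>x. norm (sc a r (\<lambda>y. r *\<^sub>R u y) x) powr p)"
      unfolding pw3 sc_int(1)[OF r sub, of "\<lambda>y. r powr p * norm (u y) powr p"]
      using ui by (rule set_integrable_mult_right)
    show "set_integrable lebesgue B1 (\<lambda>x. norm (sc a r G x) powr p)"
      unfolding pw4 sc_int(1)[OF r sub, of "\<lambda>y. norm (G y) powr p"] by (rule Gi)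
    show "\<forall>k. smooth_map (\<psi> k) \<and> compact (closure {x. \<psi> k x \<noteq> 0}) \<and> closure {x. \<psi> k x \<noteq> 0} \<subseteq> B1"
      using smk supp by simp
    show "(\<lambda>k. LINT x:B1|lebesgue. norm (\<psi> k x - sc a r (\<lambda>y. r *\<^sub>R u y) x) powr p) \<longlonglongrightarrow> 0"
      unfolding pw1 sc_int(2)[OF r sub, of "\<lambda>y. r powr p * norm (\<phi> _ y - u y) powr p"]
      using tendsto_mult_right_zero[OF l1, of "r ^ DIM(real^'n) * r powr p"] by (simp add: mult.assoc)
    show "(\<lambda>k. LINT x:B1|lebesgue. norm (jac (\<psi> k) x - sc a r G x) powr p) \<longlonglongrightarrow> 0"
      unfolding pw2 sc_int(2)[OF r sub, of "\<lambda>y. norm (jac (\<phi> _) y - G y) powr p"]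
      using tendsto_mult_right_zero[OF j1, of "r ^ DIM(real^'n)"] by simp
  qed
qed


definition hh :: "(real^'n::finite^'m::finite \<Rightarrow> real) \<Rightarrow> real \<Rightarrow> real^'n^'m \<Rightarrow> real" where
  "hh \<phi> p A = (if A = 0 then 0 else \<phi> (A /\<^sub>R norm A) * norm A powr p)"

lemma open_lebesgue: "open (S::'a::euclidean_space set) \<Longrightarrow> S \<in> sets lebesgue"
  by (metis borel_open sets_completionI_sets sets_lborel)

lemma Brho_open: "open (Brho \<rho>)"
  unfolding Brho_def by (intro open_Int open_ball open_halfspace_lt)

lemma Brho_sub: "Brho \<rho> \<subseteq> B1"
  unfolding Brho_def by blast

lemma db_eq:
  "delta_bar p \<rho> G \<phi> = (if continuous_on (sphere 0 1) \<phi> then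
     (1 / measure lebesgue (Brho \<rho>)) * (LINT x:Brho \<rho>|lebesgue. hh \<phi> p (G x)) else 0)"
proof -
  have "indicator (Brho \<rho> \<inter> {x. G x \<noteq> 0}) x *\<^sub>R (\<phi> (G x /\<^sub>R norm (G x)) * norm (G x) powr p) =
        indicator (Brho \<rho>) x *\<^sub>R hh \<phi> p (G x)" for x
    by (simp add: hh_def indicator_def)
  then show ?thesis unfolding delta_bar_def set_lebesgue_integral_def by simp
qed

lemma hh_scale:
  assumes "0 \<le> c"
  shows "hh \<phi> p (c *\<^sub>R A) = c powr p * hh \<phi> p A"
proof (cases "c = 0 \<or> A = 0")
  case True then show ?thesis by (auto simp: hh_def)
next
  case False
  then have c: "c > 0" and A: "A \<noteq> 0" using assms by auto
  have e: "(c *\<^sub>R A) /\<^sub>R norm (c *\<^sub>R A) = A /\<^sub>R norm A" using c by simp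
  have "c *\<^sub>R A \<noteq> 0" using c A by simp
  then have "hh \<phi> p (c *\<^sub>R A) = \<phi> (A /\<^sub>R norm A) * norm (c *\<^sub>R A) powr p"
    unfolding hh_def e by simp
  also have "\<dots> = c powr p * hh \<phi> p A" using c A by (simp add: hh_def powr_mult)
  finally show ?thesis .
qed

lemma hh_measurable:
  fixes \<phi> :: "real^'n::finite^'m::finite \<Rightarrow> real"
  assumes c: "continuous_on (sphere 0 1) \<phi>"
  shows "hh \<phi> p \<in> borel_measurable borel"
proof -
  have eq: "hh \<phi> p = (\<lambda>A. if A \<in> {0} then 0 else \<phi> (A /\<^sub>R norm A) * norm A powr p)"
    by (auto simp: hh_def fun_eq_iff)
  have c1: "continuous_on (- {0}) (\<lambda>A::real^'n^'m. A /\<^sub>R norm A)"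
    by (intro continuous_intros) auto
  have c2: "continuous_on (- {0}) (\<lambda>A::real^'n^'m. \<phi> (A /\<^sub>R norm A))"
    by (rule continuous_on_compose2[OF c c1]) (auto simp: field_simps split: if_splits)
  have c3: "continuous_on (- {0}) (\<lambda>A::real^'n^'m. norm A powr p)"
    by (intro continuous_intros) auto
  show ?thesis unfolding eq
    by (rule borel_measurable_continuous_on_if) (auto intro: continuous_on_mult c2 c3)
qed

lemma hh_int:
  fixes G :: "real^'n::finite \<Rightarrow> real^'n^'m::finite"
  assumes c: "continuous_on (sphere 0 1) \<phi>" and Gm: "G \<in> borel_measurable (lebesgue_on B1)"
    and Gi: "set_integrable lebesgue B1 (\<lambda>x. norm (G x) powr p)"
  shows "set_integrable lebesgue (Brho \<rho>) (\<lambda>x. hh \<phi> p (G x))"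
proof -
  have "compact (\<phi> ` sphere 0 1)" by (rule compact_continuous_image[OF c]) simp
  then have "bounded (\<phi> ` sphere 0 1)" by (rule compact_imp_bounded)
  then obtain M where "\<forall>y\<in>\<phi> ` sphere 0 1. norm y \<le> M" unfolding bounded_iff by blast
  then have M: "\<And>A. A \<in> sphere 0 1 \<Longrightarrow> \<bar>\<phi> A\<bar> \<le> M" by auto
  have bd: "\<bar>hh \<phi> p A\<bar> \<le> M * norm A powr p" for A
  proof (cases "A = 0")
    case True then show ?thesis by (simp add: hh_def)
  next
    case False
    then have "A /\<^sub>R norm A \<in> sphere 0 1" by simp
    then have "\<bar>\<phi> (A /\<^sub>R norm A)\<bar> \<le> M" by (rule M)
    then show ?thesis using False by (simp add: hh_def abs_mult mult_right_mono)
  qed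
  have "set_integrable lebesgue B1 (\<lambda>x. hh \<phi> p (G x))"
    unfolding sint_iff
  proof (rule Bochner_Integration.integrable_bound[where f="\<lambda>x. M * norm (G x) powr p"])
    show "integrable (lebesgue_on B1) (\<lambda>x. M * norm (G x) powr p)" using Gi unfolding sint_iff by simp
    show "(\<lambda>x. hh \<phi> p (G x)) \<in> borel_measurable (lebesgue_on B1)"
      using measurable_compose[OF Gm hh_measurable[OF c]] by simp
    have "norm (hh \<phi> p (G x)) \<le> norm (M * norm (G x) powr p)" for x
      using bd[of "G x"] by simp
    then show "AE x in lebesgue_on B1. norm (hh \<phi> p (G x)) \<le> norm (M * norm (G x) powr p)"
      by (intro AE_I2)
  qed
  then show ?thesis
    by (rule set_integrable_subset) (auto simp: open_lebesgue[OF Brho_open] Brho_sub)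
qed


lemma img_iff:
  fixes a :: "'a::euclidean_space"
  assumes r: "r > 0"
  shows "x \<in> (\<lambda>y. a + r *\<^sub>R y) ` S \<longleftrightarrow> (x - a) /\<^sub>R r \<in> S"
proof
  assume "x \<in> (\<lambda>y. a + r *\<^sub>R y) ` S"
  then obtain y where "y \<in> S" "x = a + r *\<^sub>R y" by blast
  then show "(x - a) /\<^sub>R r \<in> S" using r by simp
next
  assume "(x - a) /\<^sub>R r \<in> S"
  moreover have "x = a + r *\<^sub>R ((x - a) /\<^sub>R r)" using r by simp
  ultimately show "x \<in> (\<lambda>y. a + r *\<^sub>R y) ` S" by blast
qed

lemma Brho_scale:
  fixes a :: "real^'n::finite"
  assumes r: "r > 0" and ra: "\<rho> \<bullet> a = 0" and sub: "ball a r \<subseteq> B1"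
  shows "x \<in> (\<lambda>y. a + r *\<^sub>R y) ` Brho \<rho> \<longleftrightarrow> x \<in> ball a r \<and> x \<in> Brho \<rho>"
proof -
  have i: "\<rho> \<bullet> ((x - a) /\<^sub>R r) = (\<rho> \<bullet> x) / r" using ra by (simp add: inner_diff_right divide_inverse_commute)
  have i2: "\<rho> \<bullet> ((x - a) /\<^sub>R r) < 0 \<longleftrightarrow> \<rho> \<bullet> x < 0" unfolding i using r by (simp add: divide_less_0_iff)
  have "x \<in> ball a r \<Longrightarrow> x \<in> B1" using sub by (rule subsetD)
  moreover have "x \<in> (\<lambda>y. a + r *\<^sub>R y) ` Brho \<rho> \<longleftrightarrow> (x - a) /\<^sub>R r \<in> B1 \<and> \<rho> \<bullet> ((x - a) /\<^sub>R r) < 0"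
    unfolding img_iff[OF r] Brho_def by simp
  ultimately show ?thesis unfolding in_ball_scale[OF r] i2 Brho_def by blast
qed

lemma sc_Brho:
  fixes G :: "real^'n::finite \<Rightarrow> real^'n^'m::finite"
  assumes r: "r > 0" and ra: "\<rho> \<bullet> a = 0" and sub: "ball a r \<subseteq> B1"
  shows "set_integrable lebesgue (Brho \<rho>) (\<lambda>x. hh \<phi> p (sc a r G x)) \<longleftrightarrow> set_integrable lebesgue (Brho \<rho>) (\<lambda>y. hh \<phi> p (G y))"
    and "(LINT x:Brho \<rho>|lebesgue. hh \<phi> p (sc a r G x)) = r ^ DIM(real^'n) * (LINT y:Brho \<rho>|lebesgue. hh \<phi> p (G y))"
proof -
  have eq: "indicator (Brho \<rho>) x *\<^sub>R hh \<phi> p (sc a r G x) = indicator ((\<lambda>y. a + r *\<^sub>R y) ` Brho \<rho>) x *\<^sub>R hh \<phi> p (G ((x - a) /\<^sub>R r))" for x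
    using Brho_scale[OF r ra sub, of x] by (cases "x \<in> ball a r") (simp_all add: sc_def indicator_def hh_def)
  show "set_integrable lebesgue (Brho \<rho>) (\<lambda>x. hh \<phi> p (sc a r G x)) \<longleftrightarrow> set_integrable lebesgue (Brho \<rho>) (\<lambda>y. hh \<phi> p (G y))"
    using set_integral_affine(1)[OF r, of a "Brho \<rho>" "\<lambda>y. hh \<phi> p (G y)"] unfolding set_integrable_def eq .
  show "(LINT x:Brho \<rho>|lebesgue. hh \<phi> p (sc a r G x)) = r ^ DIM(real^'n) * (LINT y:Brho \<rho>|lebesgue. hh \<phi> p (G y))"
    using set_integral_affine(2)[OF r, of a "Brho \<rho>" "\<lambda>y. hh \<phi> p (G y)"] unfolding set_lebesgue_integral_def eq .
qed


lemma exists_orth: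
  fixes \<rho> :: "real^'n::finite"
  assumes "CARD('n) \<ge> 2"
  shows "\<exists>e. norm e = 1 \<and> \<rho> \<bullet> e = 0"
proof -
  have "\<exists>e::real^'n. e \<noteq> 0 \<and> \<rho> \<bullet> e = 0"
  proof -
    obtain i j :: 'n where ij: "i \<noteq> j"
      using assms by (metis card_2_iff' card_le_Suc_iff numeral_2_eq_2 obtain_subset_with_card_n)
    show ?thesis
    proof (cases "\<rho> $ i = 0")
      case True
      then show ?thesis by (intro exI[of _ "axis i 1"]) (simp add: inner_axis axis_eq_0_iff)
    next
      case False
      let ?e = "(\<rho> $ j) *\<^sub>R axis i 1 - (\<rho> $ i) *\<^sub>R axis j (1::real)"
      have "?e $ j = - \<rho> $ i" using ij by (simp add: axis_def)
      then have "?e \<noteq> 0" using False by (metis neg_equal_0_iff_equal zero_index)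
      moreover have "\<rho> \<bullet> ?e = 0" by (simp add: inner_diff_right inner_axis)
      ultimately show ?thesis by blast
    qed
  qed
  then obtain e :: "real^'n" where "e \<noteq> 0" "\<rho> \<bullet> e = 0" by blast
  then show ?thesis by (intro exI[of _ "e /\<^sub>R norm e"]) simp
qed

theorem lemma4p1:
  fixes \<rho> :: "real^'n::finite" and p :: real
  assumes "CARD('n) \<ge> 2" and "1 < p" and "norm \<rho> = 1"
  shows "\<forall>\<mu>1 \<in> (Hrho p \<rho> :: ((real^'n^'m::finite \<Rightarrow> real) \<Rightarrow> real) set). \<forall>\<mu>2 \<in> Hrho p \<rho>.
           \<forall>t::real. 0 \<le> t \<and> t \<le> 1 \<longrightarrow> (\<lambda>\<phi>. t * \<mu>1 \<phi> + (1 - t) * \<mu>2 \<phi>) \<in> Hrho p \<rho>"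
proof (intro ballI allI impI)
  fix \<mu>1 \<mu>2 :: "(real^'n^'m \<Rightarrow> real) \<Rightarrow> real" and t :: real
  assume m1: "\<mu>1 \<in> Hrho p \<rho>" and m2: "\<mu>2 \<in> Hrho p \<rho>" and t: "0 \<le> t \<and> t \<le> 1"
  obtain G1 :: "real^'n \<Rightarrow> real^'n^'m" and u1 :: "real^'n \<Rightarrow> real^'m"
    where W1: "W0 p u1 G1" and mu1: "\<mu>1 = delta_bar p \<rho> G1"
    using m1 unfolding Hrho_def by blast
  obtain G2 :: "real^'n \<Rightarrow> real^'n^'m" and u2 :: "real^'n \<Rightarrow> real^'m"
    where W2: "W0 p u2 G2" and mu2: "\<mu>2 = delta_bar p \<rho> G2"
    using m2 unfolding Hrho_def by blast
  have p0: "0 \<le> p" "p > 0" using assms(2) by auto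
  obtain e :: "real^'n" where e: "norm e = 1" "\<rho> \<bullet> e = 0" using exists_orth[OF assms(1)] by blast
  define r :: real where "r = 1/4"
  define a1 where "a1 = (1/2) *\<^sub>R e"
  define a2 where "a2 = - (1/2) *\<^sub>R e"
  have r: "r > 0" by (simp add: r_def)
  have ra1: "\<rho> \<bullet> a1 = 0" and ra2: "\<rho> \<bullet> a2 = 0" using e by (simp_all add: a1_def a2_def)
  have na: "norm a1 = 1/2" "norm a2 = 1/2" using e by (simp_all add: a1_def a2_def)
  have sub1: "ball a1 r \<subseteq> B1"
  proof
    fix x assume "x \<in> ball a1 r"
    then have "norm (x - a1) < 1/4" by (simp add: r_def dist_norm norm_minus_commute)
    moreover have "norm x \<le> norm (x - a1) + norm a1" using norm_triangle_sub[of x a1] by simp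
    ultimately show "x \<in> B1" using na by simp
  qed
  have sub2: "ball a2 r \<subseteq> B1"
  proof
    fix x assume "x \<in> ball a2 r"
    then have "norm (x - a2) < 1/4" by (simp add: r_def dist_norm norm_minus_commute)
    moreover have "norm x \<le> norm (x - a2) + norm a2" using norm_triangle_sub[of x a2] by simp
    ultimately show "x \<in> B1" using na by simp
  qed
  have disj: "\<not> (x \<in> ball a1 r \<and> x \<in> ball a2 r)" for x
  proof
    assume "x \<in> ball a1 r \<and> x \<in> ball a2 r"
    then have "norm (x - a1) < 1/4" "norm (x - a2) < 1/4" by (simp_all add: r_def dist_norm norm_minus_commute)
    moreover have "norm (a1 - a2) \<le> norm (x - a1) + norm (x - a2)"
      using norm_triangle_ineq4[of "x - a2" "x - a1"] by (simp add: norm_minus_commute)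
    moreover have "a1 - a2 = e" by (simp add: a1_def a2_def scaleR_left_distrib[symmetric])
    ultimately show False using e by simp
  qed
  define N where "N = DIM(real^'n)"
  have rN: "r ^ N > 0" using r by simp
  define c1 where "c1 = (t / r ^ N) powr (1/p)"
  define c2 where "c2 = ((1 - t) / r ^ N) powr (1/p)"
  have c1: "c1 \<ge> 0" "c1 powr p = t / r ^ N"
    using t rN p0 by (simp_all add: c1_def powr_powr)
  have c2: "c2 \<ge> 0" "c2 powr p = (1 - t) / r ^ N"
    using t rN p0 by (simp_all add: c2_def powr_powr)
  define A where "A = sc a1 r (\<lambda>y. c1 *\<^sub>R G1 y)"
  define B where "B = sc a2 r (\<lambda>y. c2 *\<^sub>R G2 y)"
  define G where "G x = A x + B x" for x
  define u where "u x = sc a1 r (\<lambda>y. r *\<^sub>R (c1 *\<^sub>R u1 y)) x + sc a2 r (\<lambda>y. r *\<^sub>R (c2 *\<^sub>R u2 y)) x" for x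
  have WG: "W0 p u G"
    unfolding u_def[abs_def] G_def[abs_def] A_def B_def
    by (rule W0_add[OF W0_sc[OF W0_scale[OF W1] r sub1] W0_sc[OF W0_scale[OF W2] r sub2] p0(1)])
  have "delta_bar p \<rho> G = (\<lambda>\<phi>. t * \<mu>1 \<phi> + (1 - t) * \<mu>2 \<phi>)"
  proof
    fix \<phi> :: "real^'n^'m \<Rightarrow> real"
    show "delta_bar p \<rho> G \<phi> = t * \<mu>1 \<phi> + (1 - t) * \<mu>2 \<phi>"
    proof (cases "continuous_on (sphere 0 1) \<phi>")
      case False then show ?thesis unfolding mu1 mu2 db_eq by simp
    next
      case True
      have um1: "G1 \<in> borel_measurable (lebesgue_on B1)" "set_integrable lebesgue B1 (\<lambda>x. norm (G1 x) powr p)"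
        using W1 unfolding W0_def by blast+
      have um2: "G2 \<in> borel_measurable (lebesgue_on B1)" "set_integrable lebesgue B1 (\<lambda>x. norm (G2 x) powr p)"
        using W2 unfolding W0_def by blast+
      have I1: "set_integrable lebesgue (Brho \<rho>) (\<lambda>y. hh \<phi> p (G1 y))" by (rule hh_int[OF True um1])
      have I2: "set_integrable lebesgue (Brho \<rho>) (\<lambda>y. hh \<phi> p (G2 y))" by (rule hh_int[OF True um2])
      have hs1: "hh \<phi> p (c1 *\<^sub>R G1 y) = c1 powr p * hh \<phi> p (G1 y)" for y by (rule hh_scale[OF c1(1)])
      have hs2: "hh \<phi> p (c2 *\<^sub>R G2 y) = c2 powr p * hh \<phi> p (G2 y)" for y by (rule hh_scale[OF c2(1)])
      have J1: "set_integrable lebesgue (Brho \<rho>) (\<lambda>y. hh \<phi> p (c1 *\<^sub>R G1 y))"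
        unfolding hs1 using I1 by (rule set_integrable_mult_right)
      have J2: "set_integrable lebesgue (Brho \<rho>) (\<lambda>y. hh \<phi> p (c2 *\<^sub>R G2 y))"
        unfolding hs2 using I2 by (rule set_integrable_mult_right)
      have KA: "set_integrable lebesgue (Brho \<rho>) (\<lambda>x. hh \<phi> p (A x))"
        unfolding A_def sc_Brho(1)[OF r ra1 sub1] by (rule J1)
      have KB: "set_integrable lebesgue (Brho \<rho>) (\<lambda>x. hh \<phi> p (B x))"
        unfolding B_def sc_Brho(1)[OF r ra2 sub2] by (rule J2)
      have LA: "(LINT x:Brho \<rho>|lebesgue. hh \<phi> p (A x)) = t * (LINT y:Brho \<rho>|lebesgue. hh \<phi> p (G1 y))"
        unfolding A_def sc_Brho(2)[OF r ra1 sub1] hs1 using rN r c1(2) by (simp add: N_def)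
      have LB: "(LINT x:Brho \<rho>|lebesgue. hh \<phi> p (B x)) = (1 - t) * (LINT y:Brho \<rho>|lebesgue. hh \<phi> p (G2 y))"
        unfolding B_def sc_Brho(2)[OF r ra2 sub2] hs2 using rN r c2(2) by (simp add: N_def)
      have pw: "hh \<phi> p (G x) = hh \<phi> p (A x) + hh \<phi> p (B x)" for x
        using disj[of x] by (cases "x \<in> ball a1 r") (auto simp: G_def A_def B_def sc_def hh_def)
      have "(LINT x:Brho \<rho>|lebesgue. hh \<phi> p (G x)) = t * (LINT y:Brho \<rho>|lebesgue. hh \<phi> p (G1 y)) + (1 - t) * (LINT y:Brho \<rho>|lebesgue. hh \<phi> p (G2 y))"
        unfolding pw set_integral_add(2)[OF KA KB] LA LB ..
      then show ?thesis unfolding mu1 mu2 db_eq if_P[OF True] by (simp add: ring_distribs mult.left_commute diff_divide_distrib)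
    qed
  qed
  then have eqd: "(\<lambda>\<phi>. t * \<mu>1 \<phi> + (1 - t) * \<mu>2 \<phi>) = delta_bar p \<rho> G" by simp
  show "(\<lambda>\<phi>. t * \<mu>1 \<phi> + (1 - t) * \<mu>2 \<phi>) \<in> Hrho p \<rho>"
    unfolding Hrho_def mem_Collect_eq
    by (rule exI[of _ G], rule conjI[OF eqd], rule exI[of _ u], rule WG)
qed

end
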